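(* Let $X$ be a locally compact (not necessarily abelian) group with neutral element $e$ such that for every open neighbourhood $U_e$ of $e$ there exists $x_*\in U_e$ such that the sequence $(x_*^n)_{n\in\mathbb{N}}$ is not contained in any compact subset of $X$. If a family $\mathcal{F}\subset C_0(X)$ is equicontinuous at every point and equivanishing, then it is pointwise bounded.
   Context: $C_0(X)$ is the space of continuous complex-valued functions on $X$ vanishing at infinity. $\mathcal{F}$ is pointwise bounded if for every $x\in X$ there is $M_x>0$ with $|f(x)|<M_x$ for all $f\in\mathcal{F}$; equicontinuous at every point if for every $x\in X$ and $\varepsilon>0$ there is an open neighbourhood $U$ of $x$ with $|f(y)-f(x)|<\varepsilon$ for all $y\in U$, $f\in\mathcal{F}$; equivanishing if for every $\varepsilon>0$ there is a compact $K\subset X$ with $\sup_{x\in X\setminus K}|f(x)|<\varepsilon$ for all $f\in\mathcal{F}$. *)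

theory Defs
  imports "HOL-Analysis.Analysis"
begin

text \<open>The (not necessarily abelian) group is written additively, as in the class
  topological_group_add: neutral element 0, group operation +. The n-th power of x
  is the n-fold product x + ... + x.\<close>

definition gpow :: "'a::monoid_add \<Rightarrow> nat \<Rightarrow> 'a" where
  "gpow x n = ((\<lambda>y. y + x) ^^ n) 0"

definition C0 :: "('a::topological_space \<Rightarrow> complex) set" where
  "C0 = {f. continuous_on UNIV f \<and>
            (\<forall>\<epsilon>>0. \<exists>K. compact K \<and> (\<forall>x\<in>UNIV - K. norm (f x) < \<epsilon>))}"

definition pointwise_bounded :: "('a \<Rightarrow> complex) set \<Rightarrow> bool" where
  "pointwise_bounded F \<longleftrightarrow> (\<forall>x. \<exists>M>0. \<forall>f\<in>F. norm (f x) < M)"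

definition equicontinuous_everywhere :: "('a::topological_space \<Rightarrow> complex) set \<Rightarrow> bool" where
  "equicontinuous_everywhere F \<longleftrightarrow>
     (\<forall>x. \<forall>\<epsilon>>0. \<exists>U. open U \<and> x \<in> U \<and> (\<forall>y\<in>U. \<forall>f\<in>F. norm (f y - f x) < \<epsilon>))"

definition equivanishing :: "('a::topological_space \<Rightarrow> complex) set \<Rightarrow> bool" where
  "equivanishing F \<longleftrightarrow>
     (\<forall>\<epsilon>>0. \<exists>K. compact K \<and>
        (\<forall>f\<in>F. (SUP x\<in>UNIV - K. ereal (norm (f x))) < ereal \<epsilon>))"

end

theory Submission
  imports Defs
begin

lemma local_unif:
  fixes F :: "('a::topological_group_add \<Rightarrow> complex) set" and y :: 'a
  assumes "equicontinuous_everywhere F"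
  shows "\<exists>V. open V \<and> 0 \<in> V \<and> (\<forall>a\<in>V. \<forall>b\<in>V. \<forall>f\<in>F. norm (f (y+a+b) - f (y+a)) < 1)"
proof -
  obtain U where U: "open U" "y \<in> U" "\<forall>z\<in>U. \<forall>f\<in>F. norm (f z - f y) < 1/2"
  proof -
    have "(0::real) < 1/2" by simp
    then obtain U where "open U" "y \<in> U" "\<forall>z\<in>U. \<forall>f\<in>F. norm (f z - f y) < 1/2"
      using assms unfolding equicontinuous_everywhere_def by meson
    then show ?thesis using that by simp
  qed
  have c: "continuous_on UNIV (\<lambda>p::'a\<times>'a. y + fst p + snd p)"
    by (intro continuous_intros)
  have o: "open ((\<lambda>p::'a\<times>'a. y + fst p + snd p) -` U)"
    using open_vimage[OF U(1) c] .
  have h0: "(0,0) \<in> (\<lambda>p::'a\<times>'a. y + fst p + snd p) -` U" using U(2) by simp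
  obtain A B where AB: "open A" "open B" "(0,0) \<in> A \<times> B"
      "A \<times> B \<subseteq> (\<lambda>p::'a\<times>'a. y + fst p + snd p) -` U"
    using o h0 by (rule open_prod_elim)
  show ?thesis
  proof (intro exI conjI ballI)
    show "open (A \<inter> B)" using AB by auto
    show "0 \<in> A \<inter> B" using AB by auto
    fix a b f assume a: "a \<in> A \<inter> B" and b: "b \<in> A \<inter> B" and f: "f \<in> F"
    have 1: "y + a + b \<in> U" using AB(4) a b by auto
    have "(a,0) \<in> A \<times> B" using AB(3) a by auto
    then have "(a,0) \<in> (\<lambda>p::'a\<times>'a. y + fst p + snd p) -` U" using AB(4) by blast
    then have 2: "y + a \<in> U" by simp
    have e: "f (y+a+b) - f (y+a) = (f (y+a+b) - f y) - (f (y+a) - f y)" by simp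
    have "norm (f (y+a+b) - f (y+a)) \<le> norm (f (y+a+b) - f y) + norm (f (y+a) - f y)"
      unfolding e by (rule norm_triangle_ineq4)
    also have "\<dots> < 1/2 + 1/2"
    proof (rule add_strict_mono)
      show "norm (f (y+a+b) - f y) < 1/2" using U(3) 1 f by blast
      show "norm (f (y+a) - f y) < 1/2" using U(3) 2 f by blast
    qed
    finally show "norm (f (y+a+b) - f (y+a)) < 1" by simp
  qed
qed

lemma unif:
  fixes F :: "('a::topological_group_add \<Rightarrow> complex) set"
  assumes "equicontinuous_everywhere F" "compact K"
  shows "\<exists>V. open V \<and> 0 \<in> V \<and> (\<forall>c\<in>K. \<forall>v\<in>V. \<forall>f\<in>F. norm (f (c+v) - f c) < 1)"
proof -
  obtain W where W: "\<And>y. open (W y) \<and> 0 \<in> W y \<and>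
      (\<forall>a\<in>W y. \<forall>b\<in>W y. \<forall>f\<in>F. norm (f (y+a+b) - f (y+a)) < 1)"
    using local_unif[OF assms(1)] by metis
  let ?O = "\<lambda>y. (\<lambda>c. -y + c) -` W y"
  have oo: "open (?O y)" for y
  proof (rule open_vimage)
    show "open (W y)" using W by blast
    show "continuous_on UNIV (\<lambda>c. -y + c)" by (intro continuous_intros)
  qed
  have cov: "K \<subseteq> (\<Union>y\<in>K. ?O y)" using W by auto
  obtain T where T: "T \<subseteq> K" "finite T" "K \<subseteq> (\<Union>y\<in>T. ?O y)"
    using compactE_image[OF assms(2), of K ?O, OF oo cov] by blast
  show ?thesis
  proof (intro exI conjI ballI)
    show "open (\<Inter>y\<in>T. W y)" using T(2) W by auto
    show "0 \<in> (\<Inter>y\<in>T. W y)" using W by auto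
    fix c v f assume c: "c \<in> K" and v: "v \<in> (\<Inter>y\<in>T. W y)" and f: "f \<in> F"
    obtain y where y: "y \<in> T" "-y + c \<in> W y" using T(3) c by auto
    have vy: "v \<in> W y" using v y by auto
    have "norm (f (y + (-y+c) + v) - f (y + (-y+c))) < 1" using W y(2) vy f by blast
    moreover have "y + (-y + c) = c" by (simp add: add.assoc[symmetric])
    ultimately show "norm (f (c+v) - f c) < 1" by simp
  qed
qed

lemma gpow_Suc: "gpow x (Suc n) = gpow x n + x"
  by (simp add: gpow_def)

theorem theorem4p7:
  fixes F :: "('a::{topological_group_add, t2_space} \<Rightarrow> complex) set"
  assumes "locally_compact_space (euclidean :: 'a topology)"
    and "\<forall>U. open U \<and> (0::'a) \<in> U \<longrightarrow>
           (\<exists>x\<in>U. \<not> (\<exists>K. compact K \<and> range (gpow x) \<subseteq> K))"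
    and "F \<subseteq> C0"
    and "equicontinuous_everywhere F"
    and "equivanishing F"
  shows "pointwise_bounded F"
  unfolding pointwise_bounded_def
proof
  fix x0 :: 'a
  obtain K where K: "compact K" "\<forall>f\<in>F. (SUP x\<in>UNIV - K. ereal (norm (f x))) < ereal 1"
  proof -
    have "\<forall>\<epsilon>>0. \<exists>K. compact K \<and> (\<forall>f\<in>F. (SUP x\<in>UNIV - K. ereal (norm (f x))) < ereal \<epsilon>)"
      using assms(5) unfolding equivanishing_def .
    then have "\<exists>K. compact K \<and> (\<forall>f\<in>F. (SUP x\<in>UNIV - K. ereal (norm (f x))) < ereal 1)"
      by (rule allE[where x=1]) simp
    then show ?thesis using that by blast
  qed
  have out: "norm (f y) < 1" if "f \<in> F" "y \<notin> K" for f y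
  proof -
    have "ereal (norm (f y)) \<le> (SUP x\<in>UNIV - K. ereal (norm (f x)))"
      by (rule SUP_upper) (use that in simp)
    also have "\<dots> < ereal 1" using K(2) that(1) by simp
    finally show ?thesis by simp
  qed
  obtain V where V: "open V" "0 \<in> V" "\<forall>c\<in>K. \<forall>v\<in>V. \<forall>f\<in>F. norm (f (c+v) - f c) < 1"
    using unif[OF assms(4) K(1)] by blast
  obtain x where x: "x \<in> V" "\<not> (\<exists>K. compact K \<and> range (gpow x) \<subseteq> K)"
    using assms(2) V(1,2) by meson
  have "\<exists>n. x0 + gpow x n \<notin> K"
  proof (rule ccontr)
    assume "\<not> ?thesis"
    hence "range (gpow x) \<subseteq> (\<lambda>z. -x0 + z) ` K"
    proof (intro subsetI)
      fix w assume "\<not> (\<exists>n. x0 + gpow x n \<notin> K)" "w \<in> range (gpow x)"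
      then obtain n where n: "w = gpow x n" "x0 + gpow x n \<in> K" by blast
      have "w = -x0 + (x0 + gpow x n)" using n(1) by (simp add: add.assoc[symmetric])
      then show "w \<in> (\<lambda>z. -x0 + z) ` K" using n(2) by (rule image_eqI)
    qed
    moreover have "compact ((\<lambda>z. -x0 + z) ` K)"
      by (intro compact_continuous_image K(1) continuous_intros)
    ultimately show False using x(2) by blast
  qed
  define N where "N = (LEAST n. x0 + gpow x n \<notin> K)"
  have NK: "x0 + gpow x N \<notin> K" unfolding N_def by (rule LeastI_ex) fact
  have inK: "x0 + gpow x m \<in> K" if "m < N" for m
    using not_less_Least[of m "\<lambda>n. x0 + gpow x n \<notin> K"] that unfolding N_def by simp
  have chain: "n \<le> N \<longrightarrow> norm (f x0) \<le> norm (f (x0 + gpow x n)) + real n" if f: "f \<in> F" for f n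
  proof (induction n)
    case 0 then show ?case by (simp add: gpow_def)
  next
    case (Suc n)
    show ?case
    proof
      assume le: "Suc n \<le> N"
      have c: "x0 + gpow x n \<in> K" using inK le by simp
      have "norm (f (x0 + gpow x n + x) - f (x0 + gpow x n)) < 1" using V(3) c x(1) f by blast
      moreover have "x0 + gpow x (Suc n) = x0 + gpow x n + x" by (simp add: gpow_Suc add.assoc)
      ultimately have "norm (f (x0 + gpow x n)) \<le> norm (f (x0 + gpow x (Suc n))) + 1"
        using norm_triangle_sub[of "f (x0 + gpow x n)" "f (x0 + gpow x n + x)"]
        by (simp add: norm_minus_commute)
      then show "norm (f x0) \<le> norm (f (x0 + gpow x (Suc n))) + real (Suc n)"
        using Suc.IH le by simp
    qed
  qed
  show "\<exists>M>0. \<forall>f\<in>F. norm (f x0) < M"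
  proof (intro exI conjI ballI)
    show "(0::real) < real N + 1" by simp
    fix f assume f: "f \<in> F"
    have "norm (f x0) \<le> norm (f (x0 + gpow x N)) + real N" using chain[OF f, of N] by simp
    moreover have "norm (f (x0 + gpow x N)) < 1" using out[OF f NK] .
    ultimately show "norm (f x0) < real N + 1" by simp
  qed
qed

end
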